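(* Let $B$ be a finite set of Boolean functions. There exists an MSO formula $\theta_{\mathit{extension}}$ over the vocabulary $\tau_{B,\mathit{dl}}$ such that for every $B$-default theory $(W,D)$: $(W,D)$ possesses a stable extension if and only if $\mathcal{A}_{(W,D)}\models\theta_{\mathit{extension}}$.
   Context: $B$-formulae are propositional formulae built from variables using the functions in $B$ (0-ary ones are constants). A $B$-default rule is a triple $\frac{\alpha:\beta}{\gamma}$ of $B$-formulae (prerequisite $\alpha$, justification $\beta$, conclusion $\gamma$); a $B$-default theory $(W,D)$ is a set $W$ of $B$-formulae and a set $D$ of $B$-default rules. For a set $E$ of formulae, $\Gamma(E)$ is the smallest set of formulae with $W\subseteq\Gamma(E)$, $\Gamma(E)$ closed under propositional consequence, and $\gamma\in\Gamma(E)$ whenever $\frac{\alpha:\beta}{\gamma}\in D$, $\alpha\in\Gamma(E)$ and $\neg\beta\notin E$. A stable extension of $(W,D)$ is a set $E$ with $E=\Gamma(E)$. The vocabulary $\tau_{B,\mathit{dl}}$ consists of unary symbols $\mathrm{const}_f$ (for 0-ary $f\in B$), binary symbols $\mathrm{conn}_{f,i}$ ($f\in B$, $1\le i\le\mathrm{arity}(f)$), unary symbols $\mathrm{var},\mathrm{repr},\mathrm{kb},\mathrm{default}$ and binary symbols $\mathrm{prem},\mathrm{just},\mathrm{concl}$. The structure $\mathcal{A}_{(W,D)}$ has as universe the set of subformulae of the formulae in $W\cup\{\alpha,\beta,\gamma,\neg\beta \mid \frac{\alpha:\beta}{\gamma}\in D\}$ together with one new element for each default in $D$; $\mathrm{var}(x)$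 holds iff $x$ is a variable, $\mathrm{repr}(x)$ iff $x$ is one of the formulae of $W$ or one of the $\alpha,\beta,\gamma$ of defaults, $\mathrm{const}_f(x)$ iff $x$ is the constant $f$, $\mathrm{conn}_{f,i}(x,y)$ iff $x$ is the $i$-th argument of the function $f$ at the root of $y$, $\mathrm{kb}(x)$ iff $x\in W$, $\mathrm{default}(x)$ iff $x$ represents a default of $D$, and $\mathrm{prem}(x,y)$ (resp. $\mathrm{just}(x,y)$, $\mathrm{concl}(x,y)$) iff $y$ represents a default $\frac{\alpha:\beta}{\gamma}$ and $x$ is its $\alpha$ (resp. $\beta$, $\gamma$). *)

theory Defs
  imports Main
begin

text \<open>Function symbols have type 'f; ar f is the arity, sem f the Boolean function
  (applied to the list of argument values).
  Neg is an additional negation constructor, needed because default rules refer to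
  the negated justification (which need not be a B-formula).\<close>

datatype 'f form = Var nat | Neg "'f form" | App 'f "'f form list"

fun eval :: "('f \<Rightarrow> bool list \<Rightarrow> bool) \<Rightarrow> (nat \<Rightarrow> bool) \<Rightarrow> 'f form \<Rightarrow> bool" where
  "eval sem v (Var n) = v n"
| "eval sem v (Neg \<phi>) = (\<not> eval sem v \<phi>)"
| "eval sem v (App f args) = sem f (map (eval sem v) args)"

fun is_Bform :: "'f set \<Rightarrow> ('f \<Rightarrow> nat) \<Rightarrow> 'f form \<Rightarrow> bool" where
  "is_Bform B ar (Var n) = True"
| "is_Bform B ar (Neg \<phi>) = False"
| "is_Bform B ar (App f args) = (f \<in> B \<and> length args = ar f \<and> (\<forall>a \<in> set args. is_Bform B ar a))"

text \<open>The formula language in which extensions live: B-formulae plus negation.\<close>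
fun in_lang :: "'f set \<Rightarrow> ('f \<Rightarrow> nat) \<Rightarrow> 'f form \<Rightarrow> bool" where
  "in_lang B ar (Var n) = True"
| "in_lang B ar (Neg \<phi>) = in_lang B ar \<phi>"
| "in_lang B ar (App f args) = (f \<in> B \<and> length args = ar f \<and> (\<forall>a \<in> set args. in_lang B ar a))"

fun subformulas :: "'f form \<Rightarrow> 'f form set" where
  "subformulas (Var n) = {Var n}"
| "subformulas (Neg \<phi>) = insert (Neg \<phi>) (subformulas \<phi>)"
| "subformulas (App f args) = insert (App f args) (\<Union>a \<in> set args. subformulas a)"

definition Cn :: "'f set \<Rightarrow> ('f \<Rightarrow> nat) \<Rightarrow> ('f \<Rightarrow> bool list \<Rightarrow> bool) \<Rightarrow> 'f form set \<Rightarrow> 'f form set" where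
  "Cn B ar sem S = {\<phi>. in_lang B ar \<phi> \<and> (\<forall>v. (\<forall>\<psi>\<in>S. eval sem v \<psi>) \<longrightarrow> eval sem v \<phi>)}"

type_synonym 'f default_rule = "'f form \<times> 'f form \<times> 'f form"  (* (prerequisite, justification, conclusion) *)

definition default_theory :: "'f set \<Rightarrow> ('f \<Rightarrow> nat) \<Rightarrow> 'f form set \<Rightarrow> 'f default_rule set \<Rightarrow> bool" where
  "default_theory B ar W D \<longleftrightarrow> finite W \<and> finite D \<and> (\<forall>\<phi>\<in>W. is_Bform B ar \<phi>) \<and>
     (\<forall>(\<alpha>,\<beta>,\<gamma>)\<in>D. is_Bform B ar \<alpha> \<and> is_Bform B ar \<beta> \<and> is_Bform B ar \<gamma>)"

definition Gamma :: "'f set \<Rightarrow> ('f \<Rightarrow> nat) \<Rightarrow> ('f \<Rightarrow> bool list \<Rightarrow> bool) \<Rightarrow>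
    'f form set \<Rightarrow> 'f default_rule set \<Rightarrow> 'f form set \<Rightarrow> 'f form set" where
  "Gamma B ar sem W D E = \<Inter>{S. W \<subseteq> S \<and> Cn B ar sem S \<subseteq> S \<and>
       (\<forall>(\<alpha>,\<beta>,\<gamma>)\<in>D. \<alpha> \<in> S \<and> Neg \<beta> \<notin> E \<longrightarrow> \<gamma> \<in> S)}"

definition stable_extension :: "'f set \<Rightarrow> ('f \<Rightarrow> nat) \<Rightarrow> ('f \<Rightarrow> bool list \<Rightarrow> bool) \<Rightarrow>
    'f form set \<Rightarrow> 'f default_rule set \<Rightarrow> 'f form set \<Rightarrow> bool" where
  "stable_extension B ar sem W D E \<longleftrightarrow> E = Gamma B ar sem W D E"

definition has_stable_extension :: "'f set \<Rightarrow> ('f \<Rightarrow> nat) \<Rightarrow> ('f \<Rightarrow> bool list \<Rightarrow> bool) \<Rightarrow>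
    'f form set \<Rightarrow> 'f default_rule set \<Rightarrow> bool" where
  "has_stable_extension B ar sem W D \<longleftrightarrow> (\<exists>E. stable_extension B ar sem W D E)"

datatype 'r mso =
    Rel 'r "nat list"
  | Eq nat nat
  | Mem nat nat          (* Mem x X : first-order x is in set variable X *)
  | Not "'r mso"
  | And "'r mso" "'r mso"
  | Ex1 nat "'r mso"     (* first-order existential *)
  | Ex2 nat "'r mso"     (* monadic second-order existential *)

fun mso_sat :: "'a set \<Rightarrow> ('r \<Rightarrow> 'a list \<Rightarrow> bool) \<Rightarrow> (nat \<Rightarrow> 'a) \<Rightarrow> (nat \<Rightarrow> 'a set) \<Rightarrow> 'r mso \<Rightarrow> bool" where
  "mso_sat U I v1 v2 (Rel r xs) = I r (map v1 xs)"
| "mso_sat U I v1 v2 (Eq x y) = (v1 x = v1 y)"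
| "mso_sat U I v1 v2 (Mem x X) = (v1 x \<in> v2 X)"
| "mso_sat U I v1 v2 (Not \<phi>) = (\<not> mso_sat U I v1 v2 \<phi>)"
| "mso_sat U I v1 v2 (And \<phi> \<psi>) = (mso_sat U I v1 v2 \<phi> \<and> mso_sat U I v1 v2 \<psi>)"
| "mso_sat U I v1 v2 (Ex1 x \<phi>) = (\<exists>a\<in>U. mso_sat U I (v1(x := a)) v2 \<phi>)"
| "mso_sat U I v1 v2 (Ex2 X \<phi>) = (\<exists>A. A \<subseteq> U \<and> mso_sat U I v1 (v2(X := A)) \<phi>)"

fun fv1 :: "'r mso \<Rightarrow> nat set" where
  "fv1 (Rel r xs) = set xs"
| "fv1 (Eq x y) = {x, y}"
| "fv1 (Mem x X) = {x}"
| "fv1 (Not \<phi>) = fv1 \<phi>"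
| "fv1 (And \<phi> \<psi>) = fv1 \<phi> \<union> fv1 \<psi>"
| "fv1 (Ex1 x \<phi>) = fv1 \<phi> - {x}"
| "fv1 (Ex2 X \<phi>) = fv1 \<phi>"

fun fv2 :: "'r mso \<Rightarrow> nat set" where
  "fv2 (Rel r xs) = {}"
| "fv2 (Eq x y) = {}"
| "fv2 (Mem x X) = {X}"
| "fv2 (Not \<phi>) = fv2 \<phi>"
| "fv2 (And \<phi> \<psi>) = fv2 \<phi> \<union> fv2 \<psi>"
| "fv2 (Ex1 x \<phi>) = fv2 \<phi>"
| "fv2 (Ex2 X \<phi>) = fv2 \<phi> - {X}"

definition mso_sentence :: "'r mso \<Rightarrow> bool" where
  "mso_sentence \<phi> \<longleftrightarrow> fv1 \<phi> = {} \<and> fv2 \<phi> = {}"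

fun mso_over :: "('r \<Rightarrow> bool) \<Rightarrow> ('r \<Rightarrow> nat) \<Rightarrow> 'r mso \<Rightarrow> bool" where
  "mso_over V arity (Rel r xs) = (V r \<and> length xs = arity r)"
| "mso_over V arity (Eq x y) = True"
| "mso_over V arity (Mem x X) = True"
| "mso_over V arity (Not \<phi>) = mso_over V arity \<phi>"
| "mso_over V arity (And \<phi> \<psi>) = (mso_over V arity \<phi> \<and> mso_over V arity \<psi>)"
| "mso_over V arity (Ex1 x \<phi>) = mso_over V arity \<phi>"
| "mso_over V arity (Ex2 X \<phi>) = mso_over V arity \<phi>"

text \<open>A sentence holds in a structure (U, I); the dummy assignments are irrelevant for sentences.\<close>
definition models :: "'a set \<Rightarrow> ('r \<Rightarrow> 'a list \<Rightarrow> bool) \<Rightarrow> 'r mso \<Rightarrow> bool" where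
  "models U I \<phi> \<longleftrightarrow> mso_sat U I (\<lambda>_. undefined) (\<lambda>_. {}) \<phi>"

datatype 'f dl_sym =
    SConst 'f | SConn 'f nat | SVar | SRepr | SKb | SDefault | SPrem | SJust | SConcl

fun dl_arity :: "'f dl_sym \<Rightarrow> nat" where
  "dl_arity (SConst f) = 1"
| "dl_arity (SConn f i) = 2"
| "dl_arity SVar = 1"
| "dl_arity SRepr = 1"
| "dl_arity SKb = 1"
| "dl_arity SDefault = 1"
| "dl_arity SPrem = 2"
| "dl_arity SJust = 2"
| "dl_arity SConcl = 2"

fun in_tau_dl :: "'f set \<Rightarrow> ('f \<Rightarrow> nat) \<Rightarrow> 'f dl_sym \<Rightarrow> bool" where
  "in_tau_dl B ar (SConst f) = (f \<in> B \<and> ar f = 0)"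
| "in_tau_dl B ar (SConn f i) = (f \<in> B \<and> 1 \<le> i \<and> i \<le> ar f)"
| "in_tau_dl B ar _ = True"

text \<open>Universe: subformulae (left summand) plus one new element per default (right summand).\<close>
type_synonym 'f dl_elem = "'f form + 'f default_rule"

definition dl_universe :: "'f form set \<Rightarrow> 'f default_rule set \<Rightarrow> 'f dl_elem set" where
  "dl_universe W D =
     Inl ` (\<Union>\<phi> \<in> W \<union> (\<Union>(\<alpha>,\<beta>,\<gamma>)\<in>D. {\<alpha>, \<beta>, \<gamma>, Neg \<beta>}). subformulas \<phi>) \<union> Inr ` D"

definition dl_repr :: "'f form set \<Rightarrow> 'f default_rule set \<Rightarrow> 'f form set" where
  "dl_repr W D = W \<union> (\<Union>(\<alpha>,\<beta>,\<gamma>)\<in>D. {\<alpha>, \<beta>, \<gamma>})"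

fun dl_rel :: "'f form set \<Rightarrow> 'f default_rule set \<Rightarrow> 'f dl_sym \<Rightarrow> 'f dl_elem list \<Rightarrow> bool" where
  "dl_rel W D (SConst f) xs = (\<exists>x. xs = [x] \<and> x \<in> dl_universe W D \<and> x = Inl (App f []))"
| "dl_rel W D (SConn f i) xs = (\<exists>x y args. xs = [x, y] \<and> x \<in> dl_universe W D \<and> y \<in> dl_universe W D \<and>
       y = Inl (App f args) \<and> 1 \<le> i \<and> i \<le> length args \<and> x = Inl (args ! (i - 1)))"
| "dl_rel W D SVar xs = (\<exists>x n. xs = [x] \<and> x \<in> dl_universe W D \<and> x = Inl (Var n))"
| "dl_rel W D SRepr xs = (\<exists>\<phi>. xs = [Inl \<phi>] \<and> \<phi> \<in> dl_repr W D)"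
| "dl_rel W D SKb xs = (\<exists>\<phi>. xs = [Inl \<phi>] \<and> \<phi> \<in> W)"
| "dl_rel W D SDefault xs = (\<exists>d. xs = [Inr d] \<and> d \<in> D)"
| "dl_rel W D SPrem xs = (\<exists>\<alpha> \<beta> \<gamma>. xs = [Inl \<alpha>, Inr (\<alpha>,\<beta>,\<gamma>)] \<and> (\<alpha>,\<beta>,\<gamma>) \<in> D)"
| "dl_rel W D SJust xs = (\<exists>\<alpha> \<beta> \<gamma>. xs = [Inl \<beta>, Inr (\<alpha>,\<beta>,\<gamma>)] \<and> (\<alpha>,\<beta>,\<gamma>) \<in> D)"
| "dl_rel W D SConcl xs = (\<exists>\<alpha> \<beta> \<gamma>. xs = [Inl \<gamma>, Inr (\<alpha>,\<beta>,\<gamma>)] \<and> (\<alpha>,\<beta>,\<gamma>) \<in> D)"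

end

theory Submission
  imports Defs
begin


definition TT :: "'r mso" where "TT = Not (Ex1 0 (Not (Eq 0 0)))"
fun BigAnd :: "'r mso list \<Rightarrow> 'r mso" where
  "BigAnd [] = TT" | "BigAnd (p#ps) = And p (BigAnd ps)"
definition OrF :: "'r mso \<Rightarrow> 'r mso \<Rightarrow> 'r mso" where "OrF a b = Not (And (Not a) (Not b))"
fun BigOr :: "'r mso list \<Rightarrow> 'r mso" where
  "BigOr [] = Not TT" | "BigOr (p#ps) = OrF p (BigOr ps)"
definition Imp :: "'r mso \<Rightarrow> 'r mso \<Rightarrow> 'r mso" where "Imp a b = Not (And a (Not b))"
definition Iff :: "'r mso \<Rightarrow> 'r mso \<Rightarrow> 'r mso" where "Iff a b = And (Imp a b) (Imp b a)"
definition All1 :: "nat \<Rightarrow> 'r mso \<Rightarrow> 'r mso" where "All1 x p = Not (Ex1 x (Not p))"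
definition All2 :: "nat \<Rightarrow> 'r mso \<Rightarrow> 'r mso" where "All2 x p = Not (Ex2 x (Not p))"
definition lit :: "bool \<Rightarrow> 'r mso \<Rightarrow> 'r mso" where "lit b p = (if b then p else Not p)"

lemma sat_TT[simp]: "mso_sat U I v1 v2 TT" by (simp add: TT_def)
lemma sat_BigAnd[simp]: "mso_sat U I v1 v2 (BigAnd ps) \<longleftrightarrow> (\<forall>p\<in>set ps. mso_sat U I v1 v2 p)"
  by (induction ps) auto
lemma sat_BigOr[simp]: "mso_sat U I v1 v2 (BigOr ps) \<longleftrightarrow> (\<exists>p\<in>set ps. mso_sat U I v1 v2 p)"
  by (induction ps) (auto simp: OrF_def)
lemma sat_Imp[simp]: "mso_sat U I v1 v2 (Imp a b) \<longleftrightarrow> (mso_sat U I v1 v2 a \<longrightarrow> mso_sat U I v1 v2 b)"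
  by (simp add: Imp_def)
lemma sat_Iff[simp]: "mso_sat U I v1 v2 (Iff a b) \<longleftrightarrow> (mso_sat U I v1 v2 a \<longleftrightarrow> mso_sat U I v1 v2 b)"
  by (auto simp add: Iff_def)
lemma sat_All1[simp]: "mso_sat U I v1 v2 (All1 x p) \<longleftrightarrow> (\<forall>a\<in>U. mso_sat U I (v1(x:=a)) v2 p)"
  by (simp add: All1_def)
lemma sat_All2[simp]: "mso_sat U I v1 v2 (All2 x p) \<longleftrightarrow> (\<forall>A. A \<subseteq> U \<longrightarrow> mso_sat U I v1 (v2(x:=A)) p)"
  by (simp add: All2_def)
lemma sat_lit[simp]: "mso_sat U I v1 v2 (lit c p) \<longleftrightarrow> (mso_sat U I v1 v2 p \<longleftrightarrow> c)"
  by (simp add: lit_def)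

lemma fv_simps[simp]: "fv1 (TT::'r mso) = {}" "fv2 (TT::'r mso) = {}"
  "fv1 (BigAnd ps) = \<Union>(fv1 ` set ps)" "fv2 (BigAnd ps) = \<Union>(fv2 ` set ps)"
  "fv1 (BigOr ps) = \<Union>(fv1 ` set ps)" "fv2 (BigOr ps) = \<Union>(fv2 ` set ps)"
  "fv1 (OrF a b) = fv1 a \<union> fv1 b" "fv2 (OrF a b) = fv2 a \<union> fv2 b"
  "fv1 (Imp a b) = fv1 a \<union> fv1 b" "fv2 (Imp a b) = fv2 a \<union> fv2 b"
  "fv1 (Iff a b) = fv1 a \<union> fv1 b" "fv2 (Iff a b) = fv2 a \<union> fv2 b"
  "fv1 (All1 x p) = fv1 p - {x}" "fv2 (All1 x p) = fv2 p"
  "fv1 (All2 x p) = fv1 p" "fv2 (All2 x p) = fv2 p - {x}"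
  "fv1 (lit c p) = fv1 p" "fv2 (lit c p) = fv2 p"
  by (induction ps) (auto simp: TT_def OrF_def Imp_def Iff_def All1_def All2_def lit_def)

lemma over_simps[simp]: "mso_over V ar (TT::'r mso)"
  "mso_over V ar (BigAnd ps) = (\<forall>p\<in>set ps. mso_over V ar p)"
  "mso_over V ar (BigOr ps) = (\<forall>p\<in>set ps. mso_over V ar p)"
  "mso_over V ar (OrF a b) = (mso_over V ar a \<and> mso_over V ar b)"
  "mso_over V ar (Imp a b) = (mso_over V ar a \<and> mso_over V ar b)"
  "mso_over V ar (Iff a b) = (mso_over V ar a \<and> mso_over V ar b)"
  "mso_over V ar (All1 x p) = mso_over V ar p"
  "mso_over V ar (All2 x p) = mso_over V ar p"
  "mso_over V ar (lit c p) = mso_over V ar p"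
  by (induction ps) (auto simp: TT_def OrF_def Imp_def Iff_def All1_def All2_def lit_def)

definition consF :: "'f set \<Rightarrow> ('f \<Rightarrow> nat) \<Rightarrow> ('f \<Rightarrow> bool list \<Rightarrow> bool) \<Rightarrow> nat \<Rightarrow> 'f dl_sym mso" where
"consF B ar sem V = BigAnd (map (\<lambda>f. if ar f = 0 then All1 3 (Imp (Rel (SConst f) [3]) (lit (sem f []) (Mem 3 V)))
   else All1 3 (Imp (Ex1 4 (Rel (SConn f 1) [4,3])) (Iff (Mem 3 V)
     (BigOr (map (\<lambda>bs. BigAnd (map (\<lambda>i. Ex1 4 (And (Rel (SConn f (Suc i)) [4,3]) (lit (bs!i) (Mem 4 V)))) [0..<ar f]))
        (filter (sem f) (List.n_lists (ar f) [True,False])))))))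
   (SOME fs. set fs = B))"

definition satSF :: "nat \<Rightarrow> nat \<Rightarrow> 'f dl_sym mso" where
"satSF V Z = And (All1 2 (Imp (Rel SKb [2]) (Mem 2 V))) (All1 5 (Imp (Mem 5 Z) (All1 2 (Imp (Rel SConcl [2,5]) (Mem 2 V)))))"

definition entF where "entF B ar sem Z a = All2 2 (Imp (And (consF B ar sem 2) (satSF 2 Z)) (Mem a 2))"
definition entNF where "entNF B ar sem Z a = All2 2 (Imp (And (consF B ar sem 2) (satSF 2 Z)) (Not (Mem a 2)))"
definition closedF where "closedF B ar sem X Y = All1 0 (Imp (And (Rel SDefault [0]) (And (Not (Ex1 1 (And (Rel SJust [1,0]) (entNF B ar sem X 1))))
    (Ex1 1 (And (Rel SPrem [1,0]) (entF B ar sem Y 1))))) (Mem 0 Y))"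
definition theta where "theta B ar sem = Ex2 0 (And (closedF B ar sem 0 0) (All2 1 (Imp (closedF B ar sem 0 1)
    (All1 0 (Imp (Rel SDefault [0]) (Imp (Mem 0 0) (Mem 0 1)))))))"

lemma fv_consF: "fv1 (consF B ar sem V) = {}" "fv2 (consF B ar sem V) \<subseteq> {V}"
  by (auto simp: consF_def split: if_splits)

lemma theta_sentence: "mso_sentence (theta B ar sem)"
  using fv_consF[of B ar sem]
  by (auto simp: mso_sentence_def theta_def closedF_def entF_def entNF_def satSF_def)

lemma theta_over: "finite B \<Longrightarrow> mso_over (in_tau_dl B ar) dl_arity (theta B ar sem)"
proof -
  assume "finite B"
  then have s: "set (SOME fs. set fs = B) = B" by (metis (mono_tags) finite_list someI_ex)
  have "mso_over (in_tau_dl B ar) dl_arity (consF B ar sem V)" for V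
    using s by (auto simp: consF_def)
  then show ?thesis
    by (auto simp: theta_def closedF_def entF_def entNF_def satSF_def)
qed



context fixes B :: "'f set" and ar :: "'f \<Rightarrow> nat" and sem :: "'f \<Rightarrow> bool list \<Rightarrow> bool"
begin

lemma Bform_lang: "is_Bform B ar \<phi> \<Longrightarrow> in_lang B ar \<phi>"
  by (induction \<phi>) auto

lemma Cn_mono: "S \<subseteq> T \<Longrightarrow> Cn B ar sem S \<subseteq> Cn B ar sem T"
  by (auto simp: Cn_def)
lemma Cn_incl: "\<forall>\<phi>\<in>S. in_lang B ar \<phi> \<Longrightarrow> S \<subseteq> Cn B ar sem S"
  by (auto simp: Cn_def)
lemma Cn_idem: "Cn B ar sem (Cn B ar sem S) \<subseteq> Cn B ar sem S"
  by (auto simp: Cn_def)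

definition Sx :: "'f form set \<Rightarrow> 'f default_rule set \<Rightarrow> 'f form set" where
  "Sx W G = W \<union> (\<lambda>d. snd (snd d)) ` G"

definition closedD :: "'f form set \<Rightarrow> 'f default_rule set \<Rightarrow> 'f form set \<Rightarrow> 'f default_rule set \<Rightarrow> bool" where
  "closedD W D E H \<longleftrightarrow> (\<forall>d\<in>D. Neg (fst (snd d)) \<notin> E \<and> fst d \<in> Cn B ar sem (Sx W H) \<longrightarrow> d \<in> H)"

definition GE where "GE W D E = \<Inter>{H. H \<subseteq> D \<and> closedD W D E H}"

lemma Sx_lang: "default_theory B ar W D \<Longrightarrow> G \<subseteq> D \<Longrightarrow> \<forall>\<phi>\<in>Sx W G. in_lang B ar \<phi>"
proof
  fix \<phi> assume dt: "default_theory B ar W D" and G: "G \<subseteq> D" and p: "\<phi> \<in> Sx W G"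
  show "in_lang B ar \<phi>"
  proof (cases "\<phi> \<in> W")
    case True then show ?thesis using dt Bform_lang by (auto simp: default_theory_def)
  next
    case False
    then obtain a b where "(a,b,\<phi>) \<in> D" using p G by (auto simp: Sx_def)
    then show ?thesis using dt Bform_lang by (fastforce simp: default_theory_def)
  qed
qed

lemma Gamma_props:
  "W \<subseteq> Gamma B ar sem W D E" "Cn B ar sem (Gamma B ar sem W D E) \<subseteq> Gamma B ar sem W D E"
  "\<And>\<alpha> \<beta> \<gamma>. (\<alpha>,\<beta>,\<gamma>)\<in>D \<Longrightarrow> \<alpha> \<in> Gamma B ar sem W D E \<Longrightarrow> Neg \<beta> \<notin> E \<Longrightarrow> \<gamma> \<in> Gamma B ar sem W D E"
proof -
  show "W \<subseteq> Gamma B ar sem W D E" by (auto simp: Gamma_def)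
  show "Cn B ar sem (Gamma B ar sem W D E) \<subseteq> Gamma B ar sem W D E"
  proof
    fix x assume x: "x \<in> Cn B ar sem (Gamma B ar sem W D E)"
    show "x \<in> Gamma B ar sem W D E" unfolding Gamma_def
    proof (rule InterI)
      fix S assume S: "S \<in> {S. W \<subseteq> S \<and> Cn B ar sem S \<subseteq> S \<and> (\<forall>(\<alpha>,\<beta>,\<gamma>)\<in>D. \<alpha> \<in> S \<and> Neg \<beta> \<notin> E \<longrightarrow> \<gamma> \<in> S)}"
      then have "Gamma B ar sem W D E \<subseteq> S" unfolding Gamma_def by blast
      then have "x \<in> Cn B ar sem S" using x Cn_mono by blast
      then show "x \<in> S" using S by blast
    qed
  qed
  fix \<alpha> \<beta> \<gamma> assume d: "(\<alpha>,\<beta>,\<gamma>)\<in>D" and a: "\<alpha> \<in> Gamma B ar sem W D E" and n: "Neg \<beta> \<notin> E"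
  show "\<gamma> \<in> Gamma B ar sem W D E" unfolding Gamma_def
  proof (rule InterI)
    fix S assume S: "S \<in> {S. W \<subseteq> S \<and> Cn B ar sem S \<subseteq> S \<and> (\<forall>(\<alpha>,\<beta>,\<gamma>)\<in>D. \<alpha> \<in> S \<and> Neg \<beta> \<notin> E \<longrightarrow> \<gamma> \<in> S)}"
    then have "\<alpha> \<in> S" using a unfolding Gamma_def by blast
    then show "\<gamma> \<in> S" using S d n by blast
  qed
qed

lemma Gamma_least: "W \<subseteq> S \<Longrightarrow> Cn B ar sem S \<subseteq> S \<Longrightarrow> (\<forall>(\<alpha>,\<beta>,\<gamma>)\<in>D. \<alpha> \<in> S \<and> Neg \<beta> \<notin> E \<longrightarrow> \<gamma> \<in> S)
   \<Longrightarrow> Gamma B ar sem W D E \<subseteq> S"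
  unfolding Gamma_def by blast

lemma GE_sub: "GE W D E \<subseteq> D"
  unfolding GE_def closedD_def by blast

lemma GE_closed: "closedD W D E (GE W D E)"
  unfolding closedD_def
proof (intro ballI impI)
  fix d assume d: "d \<in> D" and h: "Neg (fst (snd d)) \<notin> E \<and> fst d \<in> Cn B ar sem (Sx W (GE W D E))"
  show "d \<in> GE W D E" unfolding GE_def
  proof (rule InterI)
    fix H assume H: "H \<in> {H. H \<subseteq> D \<and> closedD W D E H}"
    then have "GE W D E \<subseteq> H" unfolding GE_def by blast
    then have "Sx W (GE W D E) \<subseteq> Sx W H" by (auto simp: Sx_def)
    then have "fst d \<in> Cn B ar sem (Sx W H)" using h Cn_mono by blast
    then show "d \<in> H" using H h d unfolding closedD_def by blast
  qed
qed

lemma GE_least: "H \<subseteq> D \<Longrightarrow> closedD W D E H \<Longrightarrow> GE W D E \<subseteq> H"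
  unfolding GE_def by blast

lemma Gamma_eq: assumes dt: "default_theory B ar W D"
  shows "Gamma B ar sem W D E = Cn B ar sem (Sx W (GE W D E))"
proof
  let ?S = "Cn B ar sem (Sx W (GE W D E))"
  have inc: "Sx W (GE W D E) \<subseteq> ?S" using Cn_incl Sx_lang[OF dt GE_sub] by blast
  show "Gamma B ar sem W D E \<subseteq> ?S"
  proof (rule Gamma_least)
    show "W \<subseteq> ?S" using inc by (auto simp: Sx_def)
    show "Cn B ar sem ?S \<subseteq> ?S" by (rule Cn_idem)
    show "\<forall>(\<alpha>,\<beta>,\<gamma>)\<in>D. \<alpha> \<in> ?S \<and> Neg \<beta> \<notin> E \<longrightarrow> \<gamma> \<in> ?S"
    proof (clarify)
      fix \<alpha> \<beta> \<gamma> assume d: "(\<alpha>,\<beta>,\<gamma>)\<in>D" "\<alpha> \<in> ?S" "Neg \<beta> \<notin> E"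
      then have "(\<alpha>,\<beta>,\<gamma>) \<in> GE W D E" using GE_closed unfolding closedD_def by fastforce
      then show "\<gamma> \<in> ?S" using inc by (force simp: Sx_def)
    qed
  qed
  let ?G = "Gamma B ar sem W D E"
  define H where "H = {d\<in>D. snd (snd d) \<in> ?G}"
  have "closedD W D E H" unfolding closedD_def
  proof (intro ballI impI)
    fix d assume d: "d \<in> D" and h: "Neg (fst (snd d)) \<notin> E \<and> fst d \<in> Cn B ar sem (Sx W H)"
    have "Sx W H \<subseteq> ?G" using Gamma_props(1) by (auto simp: Sx_def H_def)
    then have "fst d \<in> ?G" using h Cn_mono Gamma_props(2) by blast
    then show "d \<in> H" using Gamma_props(3)[of "fst d" "fst (snd d)" "snd (snd d)"] d h
      by (auto simp: H_def)
  qed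
  then have "GE W D E \<subseteq> H" by (intro GE_least) (auto simp: H_def)
  then have "Sx W (GE W D E) \<subseteq> ?G" using Gamma_props(1) by (auto simp: Sx_def H_def)
  then show "?S \<subseteq> ?G" using Cn_mono Gamma_props(2) by blast
qed

lemma stable_iff: assumes dt: "default_theory B ar W D"
  shows "has_stable_extension B ar sem W D \<longleftrightarrow>
    (\<exists>G\<subseteq>D. closedD W D (Cn B ar sem (Sx W G)) G \<and>
        (\<forall>H\<subseteq>D. closedD W D (Cn B ar sem (Sx W G)) H \<longrightarrow> G \<subseteq> H))"
proof
  assume "has_stable_extension B ar sem W D"
  then obtain E where E: "E = Gamma B ar sem W D E"
    unfolding has_stable_extension_def stable_extension_def by blast
  let ?G = "GE W D E"
  have EE: "E = Cn B ar sem (Sx W ?G)" using E Gamma_eq[OF dt] by simp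
  show "\<exists>G\<subseteq>D. closedD W D (Cn B ar sem (Sx W G)) G \<and>
        (\<forall>H\<subseteq>D. closedD W D (Cn B ar sem (Sx W G)) H \<longrightarrow> G \<subseteq> H)"
    using GE_sub GE_closed GE_least EE by metis
next
  assume "\<exists>G\<subseteq>D. closedD W D (Cn B ar sem (Sx W G)) G \<and>
        (\<forall>H\<subseteq>D. closedD W D (Cn B ar sem (Sx W G)) H \<longrightarrow> G \<subseteq> H)"
  then obtain G where G: "G \<subseteq> D" "closedD W D (Cn B ar sem (Sx W G)) G"
    "\<forall>H\<subseteq>D. closedD W D (Cn B ar sem (Sx W G)) H \<longrightarrow> G \<subseteq> H" by blast
  let ?E = "Cn B ar sem (Sx W G)"
  have "GE W D ?E = G"
    using G GE_least[where H=G and W=W and D=D and E="?E"] GE_sub[of W D "?E"] GE_closed[of W D "?E"] by blast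
  then have "?E = Gamma B ar sem W D ?E" using Gamma_eq[OF dt] by simp
  then show "has_stable_extension B ar sem W D"
    unfolding has_stable_extension_def stable_extension_def by blast
qed

end


lemma sub_refl[simp]: "\<phi> \<in> subformulas \<phi>"
  by (cases \<phi>) auto

lemma sub_trans: "\<psi> \<in> subformulas \<phi> \<Longrightarrow> subformulas \<psi> \<subseteq> subformulas \<phi>"
  by (induction \<phi>) auto

lemma sub_Bform: "is_Bform B ar \<phi> \<Longrightarrow> \<psi> \<in> subformulas \<phi> \<Longrightarrow> is_Bform B ar \<psi>"
  by (induction \<phi>) auto

definition dl_roots :: "'f form set \<Rightarrow> 'f default_rule set \<Rightarrow> 'f form set" where
  "dl_roots W D = W \<union> (\<Union>(\<alpha>,\<beta>,\<gamma>)\<in>D. {\<alpha>, \<beta>, \<gamma>, Neg \<beta>})"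

definition dl_forms :: "'f form set \<Rightarrow> 'f default_rule set \<Rightarrow> 'f form set" where
  "dl_forms W D = \<Union>(subformulas ` dl_roots W D)"

lemma roots_iff: "\<phi> \<in> dl_roots W D \<longleftrightarrow> \<phi> \<in> W \<or> (\<exists>\<alpha> \<beta> \<gamma>. (\<alpha>,\<beta>,\<gamma>) \<in> D \<and> (\<phi> = \<alpha> \<or> \<phi> = \<beta> \<or> \<phi> = \<gamma> \<or> \<phi> = Neg \<beta>))"
  unfolding dl_roots_def by force

lemma forms_iff: "\<chi> \<in> dl_forms W D \<longleftrightarrow> (\<exists>\<phi>\<in>dl_roots W D. \<chi> \<in> subformulas \<phi>)"
  unfolding dl_forms_def by blast

lemma univ_eq: "dl_universe W D = Inl ` dl_forms W D \<union> Inr ` D"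
  unfolding dl_universe_def dl_forms_def dl_roots_def by (rule refl)

lemma forms_closed: "\<psi> \<in> dl_forms W D \<Longrightarrow> \<chi> \<in> subformulas \<psi> \<Longrightarrow> \<chi> \<in> dl_forms W D"
  unfolding forms_iff using sub_trans by blast

lemma arg_in_forms: "App f args \<in> dl_forms W D \<Longrightarrow> a \<in> set args \<Longrightarrow> a \<in> dl_forms W D"
  by (erule forms_closed) (use sub_refl in force)

lemma W_in_forms: "\<phi> \<in> W \<Longrightarrow> \<phi> \<in> dl_forms W D"
proof -
  assume "\<phi> \<in> W" then have "\<phi> \<in> dl_roots W D" unfolding roots_iff by blast
  then show ?thesis unfolding forms_iff using sub_refl by blast
qed
lemma D_in_forms: "(\<alpha>,\<beta>,\<gamma>) \<in> D \<Longrightarrow> \<alpha> \<in> dl_forms W D \<and> \<beta> \<in> dl_forms W D \<and> \<gamma> \<in> dl_forms W D"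
proof -
  assume d: "(\<alpha>,\<beta>,\<gamma>) \<in> D"
  have "\<alpha> \<in> dl_roots W D" "\<beta> \<in> dl_roots W D" "\<gamma> \<in> dl_roots W D"
    unfolding roots_iff using d by blast+
  then show ?thesis unfolding forms_iff using sub_refl by blast
qed

lemma forms_Bform: assumes dt: "default_theory B ar W D" and p: "\<psi> \<in> dl_forms W D"
  shows "is_Bform B ar \<psi> \<or> (\<exists>\<beta>. \<psi> = Neg \<beta>)"
proof -
  obtain \<phi> where \<phi>: "\<phi> \<in> dl_roots W D" "\<psi> \<in> subformulas \<phi>"
    using p unfolding forms_iff by blast
  show ?thesis
  proof (cases "\<phi> \<in> W")
    case True then show ?thesis using dt \<phi> sub_Bform by (fastforce simp: default_theory_def)
  next
    case False
    then obtain \<alpha> \<beta> \<gamma> where d: "(\<alpha>,\<beta>,\<gamma>)\<in>D" "\<phi> = \<alpha> \<or> \<phi> = \<beta> \<or> \<phi> = \<gamma> \<or> \<phi> = Neg \<beta>" using \<phi> roots_iff by blast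
    have b: "is_Bform B ar \<alpha>" "is_Bform B ar \<beta>" "is_Bform B ar \<gamma>" using dt d(1) by (auto simp: default_theory_def)
    show ?thesis using d(2) \<phi>(2) b sub_Bform by auto
  qed
qed

lemma App_Bform: "default_theory B ar W D \<Longrightarrow> App f args \<in> dl_forms W D \<Longrightarrow> is_Bform B ar (App f args)"
  using forms_Bform by blast

definition consG :: "'f set \<Rightarrow> ('f \<Rightarrow> nat) \<Rightarrow> ('f \<Rightarrow> bool list \<Rightarrow> bool) \<Rightarrow> 'a set \<Rightarrow> ('f dl_sym \<Rightarrow> 'a list \<Rightarrow> bool) \<Rightarrow> 'a set \<Rightarrow> bool" where
"consG B ar sem U I V \<longleftrightarrow> (\<forall>f\<in>B.
   (ar f = 0 \<longrightarrow> (\<forall>y\<in>U. I (SConst f) [y] \<longrightarrow> (y \<in> V \<longleftrightarrow> sem f []))) \<and>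
   (ar f \<noteq> 0 \<longrightarrow> (\<forall>y\<in>U. (\<exists>x\<in>U. I (SConn f 1) [x,y]) \<longrightarrow>
      (y\<in>V \<longleftrightarrow> (\<exists>bs. length bs = ar f \<and> sem f bs \<and>
          (\<forall>i<ar f. \<exists>x\<in>U. I (SConn f (Suc i)) [x,y] \<and> (x\<in>V \<longleftrightarrow> bs!i)))))))"

definition consFf :: "('f \<Rightarrow> nat) \<Rightarrow> ('f \<Rightarrow> bool list \<Rightarrow> bool) \<Rightarrow> nat \<Rightarrow> 'f \<Rightarrow> 'f dl_sym mso" where
"consFf ar sem V f = (if ar f = 0 then All1 3 (Imp (Rel (SConst f) [3]) (lit (sem f []) (Mem 3 V)))
   else All1 3 (Imp (Ex1 4 (Rel (SConn f 1) [4,3])) (Iff (Mem 3 V)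
     (BigOr (map (\<lambda>bs. BigAnd (map (\<lambda>i. Ex1 4 (And (Rel (SConn f (Suc i)) [4,3]) (lit (bs!i) (Mem 4 V)))) [0..<ar f]))
        (filter (sem f) (List.n_lists (ar f) [True,False])))))))"

lemma consF_eq: "consF B ar sem V = BigAnd (map (consFf ar sem V) (SOME fs. set fs = B))"
  unfolding consF_def consFf_def by (rule refl)

lemma sat_consFf: "mso_sat U I v1 v2 (consFf ar sem V f) \<longleftrightarrow>
   (ar f = 0 \<longrightarrow> (\<forall>y\<in>U. I (SConst f) [y] \<longrightarrow> (y \<in> v2 V \<longleftrightarrow> sem f []))) \<and>
   (ar f \<noteq> 0 \<longrightarrow> (\<forall>y\<in>U. (\<exists>x\<in>U. I (SConn f 1) [x,y]) \<longrightarrow>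
      (y\<in>v2 V \<longleftrightarrow> (\<exists>bs. length bs = ar f \<and> sem f bs \<and>
          (\<forall>i<ar f. \<exists>x\<in>U. I (SConn f (Suc i)) [x,y] \<and> (x\<in>v2 V \<longleftrightarrow> bs!i))))))"
proof -
  have l: "(\<exists>bs\<in>set (filter (sem f) (List.n_lists k [True,False])). P bs) \<longleftrightarrow> (\<exists>bs. length bs = k \<and> sem f bs \<and> P bs)" for k P
    by (auto simp: set_n_lists)
  have a: "(\<forall>i\<in>set [0..<k]. P i) \<longleftrightarrow> (\<forall>i<k. P i)" for k P by auto
  show ?thesis
  proof (cases "ar f = 0")
    case True then show ?thesis by (simp add: consFf_def)
  next
    case False then show ?thesis by (simp add: consFf_def set_n_lists subset_code(1) atLeast0LessThan lessThan_iff Ball_def[of "{..<_}"] conj_assoc)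
  qed
qed

lemma sat_consF: assumes "finite B"
  shows "mso_sat U I v1 v2 (consF B ar sem V) \<longleftrightarrow> consG B ar sem U I (v2 V)"
proof -
  have s: "set (SOME fs. set fs = B) = B" using assms by (metis (mono_tags) finite_list someI_ex)
  show ?thesis
  proof -
    have b: "Ball (consFf ar sem V ` B) P \<longleftrightarrow> (\<forall>f\<in>B. P (consFf ar sem V f))" for P by blast
    show ?thesis unfolding consF_eq consG_def sat_BigAnd set_map s b sat_consFf by (rule refl)
  qed
qed


abbreviation consH where "consH B ar sem W D V \<equiv> consG B ar sem (dl_universe W D) (dl_rel W D) V"

lemma child: "y = Inl (App f args) \<Longrightarrow> y \<in> dl_universe W D \<Longrightarrow> i < length args \<Longrightarrow> Inl (args!i) \<in> dl_universe W D \<Longrightarrow>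
  (\<exists>x\<in>dl_universe W D. dl_rel W D (SConn f (Suc i)) [x,y] \<and> P x) \<longleftrightarrow> P (Inl (args!i))"
  by auto

lemma args_in_U: "Inl (App f args) \<in> dl_universe W D \<Longrightarrow> a \<in> set args \<Longrightarrow> Inl a \<in> dl_universe W D"
proof -
  assume "Inl (App f args) \<in> dl_universe W D" "a \<in> set args"
  then have "App f args \<in> dl_forms W D" "a \<in> set args" unfolding univ_eq by auto
  then have "a \<in> dl_forms W D" by (rule arg_in_forms)
  then show ?thesis unfolding univ_eq by blast
qed

lemma KC: assumes y: "y = Inl (App f args)" "y \<in> dl_universe W D" and l: "length args = ar f"
  shows "(\<exists>bs. length bs = ar f \<and> sem f bs \<and> (\<forall>i<ar f. \<exists>x\<in>dl_universe W D. dl_rel W D (SConn f (Suc i)) [x,y] \<and> (x\<in>V \<longleftrightarrow> bs!i)))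
     \<longleftrightarrow> sem f (map (\<lambda>a. Inl a \<in> V) args)"
proof -
  have au: "i < length args \<Longrightarrow> Inl (args!i) \<in> dl_universe W D" for i
    using args_in_U y by (metis nth_mem)
  have "(\<forall>i<ar f. \<exists>x\<in>dl_universe W D. dl_rel W D (SConn f (Suc i)) [x,y] \<and> (x\<in>V \<longleftrightarrow> bs!i))
        \<longleftrightarrow> (\<forall>i<ar f. (Inl (args!i) \<in> V \<longleftrightarrow> bs!i))" for bs
    using child[OF y(1) y(2) _ au] l by auto
  moreover have e: "length bs = ar f \<Longrightarrow> (\<forall>i<ar f. (Inl (args!i) \<in> V \<longleftrightarrow> bs!i)) \<longleftrightarrow> bs = map (\<lambda>a. Inl a \<in> V) args" for bs
    using l by (auto simp: list_eq_iff_nth_eq)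
  ultimately show ?thesis
  proof -
    assume h: "\<And>bs. (\<forall>i<ar f. \<exists>x\<in>dl_universe W D. dl_rel W D (SConn f (Suc i)) [x,y] \<and> (x\<in>V \<longleftrightarrow> bs!i))
        \<longleftrightarrow> (\<forall>i<ar f. (Inl (args!i) \<in> V \<longleftrightarrow> bs!i))"
    show ?thesis
    proof
      assume "\<exists>bs. length bs = ar f \<and> sem f bs \<and> (\<forall>i<ar f. \<exists>x\<in>dl_universe W D. dl_rel W D (SConn f (Suc i)) [x,y] \<and> (x\<in>V \<longleftrightarrow> bs!i))"
      then obtain bs where "length bs = ar f" "sem f bs" "\<forall>i<ar f. (Inl (args!i) \<in> V \<longleftrightarrow> bs!i)" using h by blast
      then show "sem f (map (\<lambda>a. Inl a \<in> V) args)" using e by simp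
    next
      assume "sem f (map (\<lambda>a. Inl a \<in> V) args)"
      then show "\<exists>bs. length bs = ar f \<and> sem f bs \<and> (\<forall>i<ar f. \<exists>x\<in>dl_universe W D. dl_rel W D (SConn f (Suc i)) [x,y] \<and> (x\<in>V \<longleftrightarrow> bs!i))"
      proof (intro exI conjI)
        let ?m = "map (\<lambda>a. Inl a \<in> V) args"
        show "length ?m = ar f" using l by simp
        show "sem f ?m" by fact
        have "\<forall>i<ar f. (Inl (args!i) \<in> V \<longleftrightarrow> ?m!i)" using l by simp
        then show "\<forall>i<ar f. \<exists>x\<in>dl_universe W D. dl_rel W D (SConn f (Suc i)) [x,y] \<and> (x\<in>V \<longleftrightarrow> ?m!i)"
          using h[of ?m] by blast
      qed
    qed
  qed
qed

lemma val_b: assumes dt: "default_theory B ar W D" and c: "consH B ar sem W D V"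
  shows "\<psi> \<in> dl_forms W D \<Longrightarrow> is_Bform B ar \<psi> \<Longrightarrow> (Inl \<psi> \<in> V \<longleftrightarrow> eval sem (\<lambda>n. Inl (Var n) \<in> V) \<psi>)"
proof (induction \<psi>)
  case (Var n) then show ?case by simp
next
  case (Neg \<psi>) then show ?case by simp
next
  case (App f args)
  let ?v = "\<lambda>n. Inl (Var n) \<in> V"
  have fB: "f \<in> B" and l: "length args = ar f" and ab: "\<forall>a\<in>set args. is_Bform B ar a" using App.prems by auto
  have af: "a \<in> set args \<Longrightarrow> a \<in> dl_forms W D" for a using App.prems(1) arg_in_forms by metis
  have m: "map (\<lambda>a. Inl a \<in> V) args = map (eval sem ?v) args"
    using App.IH af ab by (auto intro: map_cong)
  have yU: "Inl (App f args) \<in> dl_universe W D" using App.prems(1) univ_eq by blast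
  show ?case
  proof (cases "ar f = 0")
    case True
    then have "args = []" using l by simp
    then show ?thesis using c fB True yU unfolding consG_def by auto
  next
    case False
    then have "0 < length args" using l by simp
    then have ex: "\<exists>x\<in>dl_universe W D. dl_rel W D (SConn f 1) [x, Inl (App f args)]"
      using args_in_U[OF yU] yU nth_mem[of 0 args] by (intro bexI[of _ "Inl (args!0)"]) (auto simp: Suc_le_eq)
    have "Inl (App f args) \<in> V \<longleftrightarrow> sem f (map (\<lambda>a. Inl a \<in> V) args)"
      using c fB False yU ex KC[where ar=ar and sem=sem and V=V and f=f and args=args, OF refl yU l] unfolding consG_def by blast
    then show ?thesis using m by simp
  qed
qed

definition Vv where "Vv sem W D v = {x\<in>dl_universe W D. \<exists>\<psi>. x = Inl \<psi> \<and> eval sem v \<psi>}"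

lemma val_a: assumes dt: "default_theory B ar W D"
  shows "consH B ar sem W D (Vv sem W D v)"
  unfolding consG_def
proof (intro ballI conjI impI)
  fix f y assume "f \<in> B" "ar f = 0" "y \<in> dl_universe W D" "dl_rel W D (SConst f) [y]"
  then show "(y \<in> Vv sem W D v) = sem f []" by (auto simp: Vv_def)
next
  fix f y assume fB: "f \<in> B" and nz: "ar f \<noteq> 0" and yU: "y \<in> dl_universe W D"
    and ex: "\<exists>x\<in>dl_universe W D. dl_rel W D (SConn f 1) [x, y]"
  then obtain args where y: "y = Inl (App f args)" by auto
  then have "App f args \<in> dl_forms W D" using yU univ_eq by blast
  then have l: "length args = ar f" using App_Bform[OF dt] by auto
  have au: "a \<in> set args \<Longrightarrow> Inl a \<in> dl_universe W D" for a using args_in_U yU y by metis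
  have m: "map (\<lambda>a. Inl a \<in> Vv sem W D v) args = map (eval sem v) args"
    using au by (auto simp: Vv_def intro: map_cong)
  show "(y \<in> Vv sem W D v) = (\<exists>bs. length bs = ar f \<and> sem f bs \<and>
          (\<forall>i<ar f. \<exists>x\<in>dl_universe W D. dl_rel W D (SConn f (Suc i)) [x, y] \<and> (x \<in> Vv sem W D v) = bs ! i))"
    unfolding KC[where ar=ar and sem=sem and V="Vv sem W D v", OF y yU l] m using yU y by (simp add: Vv_def)
qed



lemma Vv_sub: "Vv sem W D v \<subseteq> dl_universe W D" by (auto simp: Vv_def)

lemma forms_U: "\<phi> \<in> dl_forms W D \<Longrightarrow> Inl \<phi> \<in> dl_universe W D" unfolding univ_eq by blast

lemma Vv_mem: "\<phi> \<in> dl_forms W D \<Longrightarrow> Inl \<phi> \<in> Vv sem W D v \<longleftrightarrow> eval sem v \<phi>"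
  using forms_U by (auto simp: Vv_def)

lemma lemC: assumes dt: "default_theory B ar W D" and S: "S \<subseteq> dl_forms W D" "\<forall>\<psi>\<in>S. is_Bform B ar \<psi>"
  and \<phi>: "\<phi> \<in> dl_forms W D" "is_Bform B ar \<phi>"
  shows "(\<forall>V\<subseteq>dl_universe W D. consH B ar sem W D V \<and> (\<forall>\<psi>\<in>S. Inl \<psi> \<in> V) \<longrightarrow> Inl \<phi> \<in> V) \<longleftrightarrow> \<phi> \<in> Cn B ar sem S"
    and "(\<forall>V\<subseteq>dl_universe W D. consH B ar sem W D V \<and> (\<forall>\<psi>\<in>S. Inl \<psi> \<in> V) \<longrightarrow> Inl \<phi> \<notin> V) \<longleftrightarrow> Neg \<phi> \<in> Cn B ar sem S"
proof -
  have il: "in_lang B ar \<phi>" using \<phi>(2) Bform_lang by blast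
  have e1: "(\<forall>V\<subseteq>dl_universe W D. consH B ar sem W D V \<and> (\<forall>\<psi>\<in>S. Inl \<psi> \<in> V) \<longrightarrow> P (Inl \<phi> \<in> V)) \<longleftrightarrow>
        (\<forall>v. (\<forall>\<psi>\<in>S. eval sem v \<psi>) \<longrightarrow> P (eval sem v \<phi>))" for P
  proof
    assume h: "\<forall>V\<subseteq>dl_universe W D. consH B ar sem W D V \<and> (\<forall>\<psi>\<in>S. Inl \<psi> \<in> V) \<longrightarrow> P (Inl \<phi> \<in> V)"
    show "\<forall>v. (\<forall>\<psi>\<in>S. eval sem v \<psi>) \<longrightarrow> P (eval sem v \<phi>)"
    proof (intro allI impI)
      fix v assume sv: "\<forall>\<psi>\<in>S. eval sem v \<psi>"
      have "\<forall>\<psi>\<in>S. Inl \<psi> \<in> Vv sem W D v"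
      proof
        fix \<psi> assume "\<psi> \<in> S" then show "Inl \<psi> \<in> Vv sem W D v" using sv S(1) Vv_mem[of \<psi> W D sem v] by auto
      qed
      then have "P (Inl \<phi> \<in> Vv sem W D v)" using h Vv_sub[of sem W D v] val_a[OF dt, of sem v] by simp
      then show "P (eval sem v \<phi>)" using Vv_mem[OF \<phi>(1)] by simp
    qed
  next
    assume h: "\<forall>v. (\<forall>\<psi>\<in>S. eval sem v \<psi>) \<longrightarrow> P (eval sem v \<phi>)"
    show "\<forall>V\<subseteq>dl_universe W D. consH B ar sem W D V \<and> (\<forall>\<psi>\<in>S. Inl \<psi> \<in> V) \<longrightarrow> P (Inl \<phi> \<in> V)"
    proof (intro allI impI)
      fix V assume "V \<subseteq> dl_universe W D" and c: "consH B ar sem W D V \<and> (\<forall>\<psi>\<in>S. Inl \<psi> \<in> V)"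
      let ?v = "\<lambda>n. Inl (Var n) \<in> V"
      have "\<forall>\<psi>\<in>S. eval sem ?v \<psi>"
      proof
        fix \<psi> assume "\<psi> \<in> S" then show "eval sem ?v \<psi>" using c val_b[OF dt, of sem V \<psi>] S by auto
      qed
      then have "P (eval sem ?v \<phi>)" using h by simp
      then show "P (Inl \<phi> \<in> V)" using val_b[OF dt, of sem V] c \<phi> by simp
    qed
  qed
  show "(\<forall>V\<subseteq>dl_universe W D. consH B ar sem W D V \<and> (\<forall>\<psi>\<in>S. Inl \<psi> \<in> V) \<longrightarrow> Inl \<phi> \<in> V) \<longleftrightarrow> \<phi> \<in> Cn B ar sem S"
    using e1[of "\<lambda>x. x"] il by (simp add: Cn_def)
  show "(\<forall>V\<subseteq>dl_universe W D. consH B ar sem W D V \<and> (\<forall>\<psi>\<in>S. Inl \<psi> \<in> V) \<longrightarrow> Inl \<phi> \<notin> V) \<longleftrightarrow> Neg \<phi> \<in> Cn B ar sem S"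
    using e1[of "\<lambda>x. \<not> x"] il by (simp add: Cn_def)
qed

lemma W_U: "\<phi> \<in> W \<Longrightarrow> Inl \<phi> \<in> dl_universe W D" using forms_U W_in_forms by metis
lemma D_U: "(\<alpha>,\<beta>,\<gamma>) \<in> D \<Longrightarrow> Inl \<alpha> \<in> dl_universe W D \<and> Inl \<beta> \<in> dl_universe W D \<and> Inl \<gamma> \<in> dl_universe W D \<and> Inr (\<alpha>,\<beta>,\<gamma>) \<in> dl_universe W D"
proof -
  assume d: "(\<alpha>,\<beta>,\<gamma>) \<in> D"
  then have "Inr (\<alpha>,\<beta>,\<gamma>) \<in> dl_universe W D" unfolding univ_eq by (intro UnI2 imageI)
  moreover have "\<alpha> \<in> dl_forms W D" "\<beta> \<in> dl_forms W D" "\<gamma> \<in> dl_forms W D" using D_in_forms[OF d] by auto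
  ultimately show ?thesis using forms_U by metis
qed

lemma sat_satSF: "mso_sat (dl_universe W D) (dl_rel W D) v1 v2 (satSF V Z) \<longleftrightarrow>
   (\<forall>\<psi>\<in>W. Inl \<psi> \<in> v2 V) \<and> (\<forall>d\<in>D. Inr d \<in> v2 Z \<longrightarrow> Inl (snd (snd d)) \<in> v2 V)"
proof -
  have 1: "(\<forall>a\<in>dl_universe W D. dl_rel W D SKb [a] \<longrightarrow> a \<in> v2 V) \<longleftrightarrow> (\<forall>\<psi>\<in>W. Inl \<psi> \<in> v2 V)"
    using W_U by auto
  have 2: "(\<forall>z\<in>dl_universe W D. z \<in> v2 Z \<longrightarrow> (\<forall>a\<in>dl_universe W D. dl_rel W D SConcl [a,z] \<longrightarrow> a \<in> v2 V))
     \<longleftrightarrow> (\<forall>d\<in>D. Inr d \<in> v2 Z \<longrightarrow> Inl (snd (snd d)) \<in> v2 V)"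
  proof
    assume h: "\<forall>z\<in>dl_universe W D. z \<in> v2 Z \<longrightarrow> (\<forall>a\<in>dl_universe W D. dl_rel W D SConcl [a,z] \<longrightarrow> a \<in> v2 V)"
    show "\<forall>d\<in>D. Inr d \<in> v2 Z \<longrightarrow> Inl (snd (snd d)) \<in> v2 V"
    proof (intro ballI impI)
      fix d assume d: "d \<in> D" "Inr d \<in> v2 Z"
      obtain x y z where dd: "d = (x,y,z)" by (cases d) auto
      have u: "Inl z \<in> dl_universe W D" "Inr (x,y,z) \<in> dl_universe W D" using D_U[of x y z D W] d(1) unfolding dd by auto
      have "dl_rel W D SConcl [Inl z, Inr (x,y,z)]" using d(1) unfolding dd by simp
      then show "Inl (snd (snd d)) \<in> v2 V" using h u d(2) unfolding dd by (metis snd_conv)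
    qed
  next
    assume h: "\<forall>d\<in>D. Inr d \<in> v2 Z \<longrightarrow> Inl (snd (snd d)) \<in> v2 V"
    show "\<forall>z\<in>dl_universe W D. z \<in> v2 Z \<longrightarrow> (\<forall>a\<in>dl_universe W D. dl_rel W D SConcl [a,z] \<longrightarrow> a \<in> v2 V)"
      using h by auto
  qed
  show ?thesis unfolding satSF_def using 1 2 by simp
qed

definition GG :: "'f default_rule set \<Rightarrow> 'f dl_elem set \<Rightarrow> 'f default_rule set" where
  "GG D Z = {d\<in>D. Inr d \<in> Z}"

lemma Sx_forms: "default_theory B ar W D \<Longrightarrow> G \<subseteq> D \<Longrightarrow> Sx W G \<subseteq> dl_forms W D \<and> (\<forall>\<psi>\<in>Sx W G. is_Bform B ar \<psi>)"
proof -
  assume dt: "default_theory B ar W D" and G: "G \<subseteq> D"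
  have "\<psi> \<in> dl_forms W D \<and> is_Bform B ar \<psi>" if p: "\<psi> \<in> Sx W G" for \<psi>
  proof (cases "\<psi> \<in> W")
    case True then show ?thesis using dt W_in_forms unfolding default_theory_def by blast
  next
    case False
    then obtain x y where d: "(x,y,\<psi>) \<in> D" using p G unfolding Sx_def by force
    then show ?thesis using dt D_in_forms[OF d] unfolding default_theory_def by fastforce
  qed
  then show ?thesis by blast
qed

lemma sat_ent: assumes fB: "finite B" and dt: "default_theory B ar W D" and Z: "Z \<noteq> 2"
  and a: "v1 a = Inl \<phi>" and \<phi>: "\<phi> \<in> dl_forms W D" "is_Bform B ar \<phi>"
  shows "mso_sat (dl_universe W D) (dl_rel W D) v1 v2 (entF B ar sem Z a) \<longleftrightarrow> \<phi> \<in> Cn B ar sem (Sx W (GG D (v2 Z)))"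
    and "mso_sat (dl_universe W D) (dl_rel W D) v1 v2 (entNF B ar sem Z a) \<longleftrightarrow> Neg \<phi> \<in> Cn B ar sem (Sx W (GG D (v2 Z)))"
proof -
  have s: "((\<forall>\<psi>\<in>W. Inl \<psi> \<in> A) \<and> (\<forall>d\<in>D. Inr d \<in> v2 Z \<longrightarrow> Inl (snd (snd d)) \<in> A)) \<longleftrightarrow> (\<forall>\<psi>\<in>Sx W (GG D (v2 Z)). Inl \<psi> \<in> A)" for A
    by (auto simp: Sx_def GG_def)
  have G: "GG D (v2 Z) \<subseteq> D" by (auto simp: GG_def)
  show "mso_sat (dl_universe W D) (dl_rel W D) v1 v2 (entF B ar sem Z a) \<longleftrightarrow> \<phi> \<in> Cn B ar sem (Sx W (GG D (v2 Z)))"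
    unfolding entF_def sat_All2 sat_Imp mso_sat.simps sat_consF[OF fB] sat_satSF using Z a
    by (simp add: s lemC(1)[OF dt _ _ \<phi>, symmetric] Sx_forms[OF dt G])
  show "mso_sat (dl_universe W D) (dl_rel W D) v1 v2 (entNF B ar sem Z a) \<longleftrightarrow> Neg \<phi> \<in> Cn B ar sem (Sx W (GG D (v2 Z)))"
    unfolding entNF_def sat_All2 sat_Imp mso_sat.simps sat_consF[OF fB] sat_satSF using Z a
    by (simp add: s lemC(2)[OF dt _ _ \<phi>, symmetric] Sx_forms[OF dt G])
qed


lemma GG_sub: "GG D A \<subseteq> D" by (auto simp: GG_def)

lemma sat_closedF: assumes fB: "finite B" and dt: "default_theory B ar W D" and XY: "X \<noteq> 2" "Y \<noteq> 2"
  shows "mso_sat (dl_universe W D) (dl_rel W D) v1 v2 (closedF B ar sem X Y) \<longleftrightarrow>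
    closedD B ar sem W D (Cn B ar sem (Sx W (GG D (v2 X)))) (GG D (v2 Y))"
proof -
  let ?U = "dl_universe W D" and ?I = "dl_rel W D"
  let ?EX = "Cn B ar sem (Sx W (GG D (v2 X)))" and ?EY = "Cn B ar sem (Sx W (GG D (v2 Y)))"
  have J: "(\<exists>b\<in>?U. ?I SJust [b, Inr d] \<and> mso_sat ?U ?I (v1(0 := Inr d, 1 := b)) v2 (entNF B ar sem X 1))
     \<longleftrightarrow> Neg (fst (snd d)) \<in> ?EX" if d: "d \<in> D" for d
  proof -
    obtain x y z where dd: "d = (x,y,z)" by (cases d) auto
    have u: "Inl y \<in> ?U" using D_U[of x y z D W] d dd by auto
    have f: "y \<in> dl_forms W D" "is_Bform B ar y" using D_in_forms[of x y z D W] d dd dt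
      unfolding default_theory_def by auto
    have "(\<exists>b\<in>?U. ?I SJust [b, Inr d] \<and> mso_sat ?U ?I (v1(0 := Inr d, 1 := b)) v2 (entNF B ar sem X 1))
       \<longleftrightarrow> mso_sat ?U ?I (v1(0 := Inr d, 1 := Inl y)) v2 (entNF B ar sem X 1)"
      using u d unfolding dd by auto
    also have "\<dots> \<longleftrightarrow> Neg y \<in> ?EX" by (rule sat_ent(2)[OF fB dt XY(1) _ f]) simp
    finally show ?thesis unfolding dd by simp
  qed
  have P: "(\<exists>b\<in>?U. ?I SPrem [b, Inr d] \<and> mso_sat ?U ?I (v1(0 := Inr d, 1 := b)) v2 (entF B ar sem Y 1))
     \<longleftrightarrow> fst d \<in> ?EY" if d: "d \<in> D" for d
  proof -
    obtain x y z where dd: "d = (x,y,z)" by (cases d) auto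
    have u: "Inl x \<in> ?U" using D_U[of x y z D W] d dd by auto
    have f: "x \<in> dl_forms W D" "is_Bform B ar x" using D_in_forms[of x y z D W] d dd dt
      unfolding default_theory_def by auto
    have "(\<exists>b\<in>?U. ?I SPrem [b, Inr d] \<and> mso_sat ?U ?I (v1(0 := Inr d, 1 := b)) v2 (entF B ar sem Y 1))
       \<longleftrightarrow> mso_sat ?U ?I (v1(0 := Inr d, 1 := Inl x)) v2 (entF B ar sem Y 1)"
      using u d unfolding dd by auto
    also have "\<dots> \<longleftrightarrow> x \<in> ?EY" by (rule sat_ent(1)[OF fB dt XY(2) _ f]) simp
    finally show ?thesis unfolding dd by simp
  qed
  have L: "mso_sat ?U ?I v1 v2 (closedF B ar sem X Y) \<longleftrightarrow>
     (\<forall>e\<in>?U. (?I SDefault [e] \<and>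
        \<not> (\<exists>b\<in>?U. ?I SJust [b, e] \<and> mso_sat ?U ?I (v1(0 := e, 1 := b)) v2 (entNF B ar sem X 1)) \<and>
        (\<exists>b\<in>?U. ?I SPrem [b, e] \<and> mso_sat ?U ?I (v1(0 := e, 1 := b)) v2 (entF B ar sem Y 1))) \<longrightarrow> e \<in> v2 Y)"
    unfolding closedF_def by simp
  show ?thesis unfolding L closedD_def
  proof
    assume h: "\<forall>e\<in>?U. (?I SDefault [e] \<and>
        \<not> (\<exists>b\<in>?U. ?I SJust [b, e] \<and> mso_sat ?U ?I (v1(0 := e, 1 := b)) v2 (entNF B ar sem X 1)) \<and>
        (\<exists>b\<in>?U. ?I SPrem [b, e] \<and> mso_sat ?U ?I (v1(0 := e, 1 := b)) v2 (entF B ar sem Y 1))) \<longrightarrow> e \<in> v2 Y"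
    show "\<forall>d\<in>D. Neg (fst (snd d)) \<notin> ?EX \<and> fst d \<in> Cn B ar sem (Sx W (GG D (v2 Y))) \<longrightarrow> d \<in> GG D (v2 Y)"
    proof (intro ballI impI)
      fix d assume d: "d \<in> D" and c: "Neg (fst (snd d)) \<notin> ?EX \<and> fst d \<in> Cn B ar sem (Sx W (GG D (v2 Y)))"
      have u: "Inr d \<in> ?U" using d unfolding univ_eq by blast
      have "?I SDefault [Inr d]" using d by simp
      then have "Inr d \<in> v2 Y" using h[rule_format, OF u] J[OF d] P[OF d] c by blast
      then show "d \<in> GG D (v2 Y)" using d by (simp add: GG_def)
    qed
  next
    assume h: "\<forall>d\<in>D. Neg (fst (snd d)) \<notin> ?EX \<and> fst d \<in> Cn B ar sem (Sx W (GG D (v2 Y))) \<longrightarrow> d \<in> GG D (v2 Y)"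
    show "\<forall>e\<in>?U. (?I SDefault [e] \<and>
        \<not> (\<exists>b\<in>?U. ?I SJust [b, e] \<and> mso_sat ?U ?I (v1(0 := e, 1 := b)) v2 (entNF B ar sem X 1)) \<and>
        (\<exists>b\<in>?U. ?I SPrem [b, e] \<and> mso_sat ?U ?I (v1(0 := e, 1 := b)) v2 (entF B ar sem Y 1))) \<longrightarrow> e \<in> v2 Y"
    proof (intro ballI impI)
      fix e assume eU: "e \<in> ?U" and c: "?I SDefault [e] \<and>
        \<not> (\<exists>b\<in>?U. ?I SJust [b, e] \<and> mso_sat ?U ?I (v1(0 := e, 1 := b)) v2 (entNF B ar sem X 1)) \<and>
        (\<exists>b\<in>?U. ?I SPrem [b, e] \<and> mso_sat ?U ?I (v1(0 := e, 1 := b)) v2 (entF B ar sem Y 1))"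
      then obtain d where e: "e = Inr d" and d: "d \<in> D" by auto
      have "d \<in> GG D (v2 Y)" using h d c J[OF d] P[OF d] unfolding e by blast
      then show "e \<in> v2 Y" using e by (simp add: GG_def)
    qed
  qed
qed

lemma sat_theta: assumes fB: "finite B" and dt: "default_theory B ar W D"
  shows "mso_sat (dl_universe W D) (dl_rel W D) v1 v2 (theta B ar sem) \<longleftrightarrow> has_stable_extension B ar sem W D"
proof -
  let ?U = "dl_universe W D" and ?I = "dl_rel W D"
  let ?C = "\<lambda>A H. closedD B ar sem W D (Cn B ar sem (Sx W (GG D A))) H"
  have inner: "(\<forall>e\<in>?U. ?I SDefault [e] \<longrightarrow> e \<in> A \<longrightarrow> e \<in> A') \<longleftrightarrow> GG D A \<subseteq> GG D A'" for A A'
  proof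
    assume "\<forall>e\<in>?U. ?I SDefault [e] \<longrightarrow> e \<in> A \<longrightarrow> e \<in> A'"
    then show "GG D A \<subseteq> GG D A'" unfolding GG_def univ_eq by auto
  next
    assume "GG D A \<subseteq> GG D A'"
    then show "\<forall>e\<in>?U. ?I SDefault [e] \<longrightarrow> e \<in> A \<longrightarrow> e \<in> A'" unfolding GG_def by auto
  qed
  have "mso_sat ?U ?I v1 v2 (theta B ar sem) \<longleftrightarrow>
     (\<exists>A\<subseteq>?U. ?C A (GG D A) \<and> (\<forall>A'\<subseteq>?U. ?C A (GG D A') \<longrightarrow> GG D A \<subseteq> GG D A'))"
    unfolding theta_def mso_sat.simps sat_All2 sat_Imp sat_All1
    by (simp add: sat_closedF[OF fB dt] inner del: dl_rel.simps)
  also have "\<dots> \<longleftrightarrow> (\<exists>G\<subseteq>D. closedD B ar sem W D (Cn B ar sem (Sx W G)) G \<and>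
        (\<forall>H\<subseteq>D. closedD B ar sem W D (Cn B ar sem (Sx W G)) H \<longrightarrow> G \<subseteq> H))"
  proof
    assume "\<exists>A\<subseteq>?U. ?C A (GG D A) \<and> (\<forall>A'\<subseteq>?U. ?C A (GG D A') \<longrightarrow> GG D A \<subseteq> GG D A')"
    then obtain A where A: "A \<subseteq> ?U" "?C A (GG D A)" "\<forall>A'\<subseteq>?U. ?C A (GG D A') \<longrightarrow> GG D A \<subseteq> GG D A'" by blast
    have gi: "H \<subseteq> D \<Longrightarrow> GG D (Inr ` H) = H" for H by (auto simp: GG_def)
    have iu: "H \<subseteq> D \<Longrightarrow> Inr ` H \<subseteq> ?U" for H unfolding univ_eq by blast
    show "\<exists>G\<subseteq>D. closedD B ar sem W D (Cn B ar sem (Sx W G)) G \<and>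
        (\<forall>H\<subseteq>D. closedD B ar sem W D (Cn B ar sem (Sx W G)) H \<longrightarrow> G \<subseteq> H)"
    proof (intro exI conjI allI impI)
      show "GG D A \<subseteq> D" by (rule GG_sub)
      show "closedD B ar sem W D (Cn B ar sem (Sx W (GG D A))) (GG D A)" by (rule A(2))
      fix H assume H: "H \<subseteq> D" "closedD B ar sem W D (Cn B ar sem (Sx W (GG D A))) H"
      then show "GG D A \<subseteq> H" using A(3)[rule_format, OF iu[OF H(1)]] gi[OF H(1)] by simp
    qed
  next
    assume "\<exists>G\<subseteq>D. closedD B ar sem W D (Cn B ar sem (Sx W G)) G \<and>
        (\<forall>H\<subseteq>D. closedD B ar sem W D (Cn B ar sem (Sx W G)) H \<longrightarrow> G \<subseteq> H)"
    then obtain G where G: "G \<subseteq> D" "closedD B ar sem W D (Cn B ar sem (Sx W G)) G"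
        "\<forall>H\<subseteq>D. closedD B ar sem W D (Cn B ar sem (Sx W G)) H \<longrightarrow> G \<subseteq> H" by blast
    have gi: "GG D (Inr ` G) = G" using G(1) by (auto simp: GG_def)
    have iu: "Inr ` G \<subseteq> ?U" using G(1) unfolding univ_eq by blast
    show "\<exists>A\<subseteq>?U. ?C A (GG D A) \<and> (\<forall>A'\<subseteq>?U. ?C A (GG D A') \<longrightarrow> GG D A \<subseteq> GG D A')"
    proof (intro exI[of _ "Inr ` G"] conjI allI impI)
      show "Inr ` G \<subseteq> ?U" by (rule iu)
      show "?C (Inr ` G) (GG D (Inr ` G))" using G(2) gi by simp
      fix A' assume "A' \<subseteq> ?U" "?C (Inr ` G) (GG D A')"
      then show "GG D (Inr ` G) \<subseteq> GG D A'" using G(3) GG_sub[of D A'] gi by simp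
    qed
  qed
  also have "\<dots> \<longleftrightarrow> has_stable_extension B ar sem W D" using stable_iff[OF dt] by simp
  finally show ?thesis .
qed

theorem lemma3:
  fixes B :: "'f set" and ar :: "'f \<Rightarrow> nat" and sem :: "'f \<Rightarrow> bool list \<Rightarrow> bool"
  assumes "finite B"
  shows "\<exists>\<theta> :: 'f dl_sym mso. mso_sentence \<theta> \<and> mso_over (in_tau_dl B ar) dl_arity \<theta> \<and>
           (\<forall>W D. default_theory B ar W D \<longrightarrow>
              (has_stable_extension B ar sem W D \<longleftrightarrow> models (dl_universe W D) (dl_rel W D) \<theta>))"
proof (intro exI conjI allI impI)
  show "mso_sentence (theta B ar sem)" by (rule theta_sentence)
  show "mso_over (in_tau_dl B ar) dl_arity (theta B ar sem)" by (rule theta_over[OF assms])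
  fix W D assume dt: "default_theory B ar W D"
  show "has_stable_extension B ar sem W D \<longleftrightarrow> models (dl_universe W D) (dl_rel W D) (theta B ar sem)"
    unfolding models_def using sat_theta[OF assms dt] by simp
qed

end
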